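(* Let $\sigma>0$, let $g_\sigma(x,y)=e^{-\|x-y\|^2/(2\sigma^2)}$ be the Gaussian kernel on $\mathbb{R}^N$ and $\mathfrak{g}_\sigma$ the distance it induces. Let $\eta$ be a probability law on $\mathbb{R}^N$ and fix an integer $Q\ge1$. 1. For every $\alpha\in\mathcal{P}_Q$, the problem $\inf_{X=(x_q)_{q=1}^Q\in\mathbb{R}^{N\times Q}}\mathfrak{g}_\sigma(\delta_{\alpha,X},\eta)^2$ admits at least one solution $X^\star\in\mathbb{R}^{N\times Q}$. 2. The problem $\inf_{X\in\mathbb{R}^{N\times Q},\ \alpha\in\mathcal{P}_Q}\mathfrak{g}_\sigma(\delta_{\alpha,X},\eta)^2$ admits at least one solution $X^\dagger\in\mathbb{R}^{N\times Q}$, $\alpha^\dagger\in\mathcal{P}_Q$.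
   Context: $\mathcal{P}_Q=\{\alpha\in\mathbb{R}^Q:\alpha_q\ge0,\ \sum_q\alpha_q=1\}$; for $X=(x_q)_{q=1}^Q$, $\delta_{\alpha,X}=\sum_q\alpha_q\delta_{x_q}$. The distance $\mathfrak{g}_\sigma$ is the one of the Hilbert space embedding of measures with inner product $\langle\delta_x,\delta_y\rangle=g_\sigma(x,y)$, i.e. $\mathfrak{g}_\sigma(\mu,\nu)^2=\int\int g_\sigma(x,y)(\mu-\nu)(dx)(\mu-\nu)(dy)$ for finite measures $\mu,\nu$. *)

theory Defs
  imports "HOL-Probability.Probability"
begin

definition gauss_kernel :: "real \<Rightarrow> 'a::real_normed_vector \<Rightarrow> 'a \<Rightarrow> real" where
  "gauss_kernel \<sigma> x y = exp (- (norm (x - y))\<^sup>2 / (2 * \<sigma>\<^sup>2))"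

text \<open>Squared kernel distance between finite measures mu, nu:
  the double integral of the kernel against (mu - nu) x (mu - nu), expanded by bilinearity.\<close>
definition gdist2 :: "real \<Rightarrow> 'a::real_normed_vector measure \<Rightarrow> 'a measure \<Rightarrow> real" where
  "gdist2 \<sigma> \<mu> \<nu> =
     (\<integral>x. (\<integral>y. gauss_kernel \<sigma> x y \<partial>\<mu>) \<partial>\<mu>)
     - 2 * (\<integral>x. (\<integral>y. gauss_kernel \<sigma> x y \<partial>\<nu>) \<partial>\<mu>)
     + (\<integral>x. (\<integral>y. gauss_kernel \<sigma> x y \<partial>\<nu>) \<partial>\<nu>)"

definition prob_simplex :: "nat \<Rightarrow> (nat \<Rightarrow> real) set" where
  "prob_simplex Q = {\<alpha>. (\<forall>q<Q. 0 \<le> \<alpha> q) \<and> (\<Sum>q<Q. \<alpha> q) = 1}"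

text \<open>The discrete measure sum_q alpha_q delta_{x_q} on the Borel sets: push-forward of the
  weighted counting measure on {0..Q-1} under q |-> x_q.\<close>
definition dirac_comb :: "nat \<Rightarrow> (nat \<Rightarrow> real) \<Rightarrow> (nat \<Rightarrow> 'a::topological_space) \<Rightarrow> 'a measure" where
  "dirac_comb Q \<alpha> X = distr (point_measure {..<Q} (\<lambda>q. ennreal (\<alpha> q))) borel X"

end

theory Submission
  imports Defs
begin

lemma gk_pos: "0 < gauss_kernel s x y" by (simp add: gauss_kernel_def)
lemma gk_le1: "gauss_kernel s x y \<le> 1"
  by (simp add: gauss_kernel_def)
lemma gk_nonneg[simp]: "0 \<le> gauss_kernel s x y" by (simp add: gauss_kernel_def)
lemma gk_same: "gauss_kernel s x x = 1" by (simp add: gauss_kernel_def)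
lemma gk_sym: "gauss_kernel s x y = gauss_kernel s y x"
  by (simp add: gauss_kernel_def norm_minus_commute)
lemma gk_cont: "continuous_on UNIV (\<lambda>p. gauss_kernel s (fst p) (snd p))"
  unfolding gauss_kernel_def divide_inverse by (intro continuous_intros) 
lemma gk_meas[measurable]: "(\<lambda>(x,y). gauss_kernel s x y) \<in> borel_measurable borel"
  using borel_measurable_continuous_onI[OF gk_cont] by (simp add: case_prod_beta')
lemma gk_tendsto[tendsto_intros]: "(f \<longlongrightarrow> a) F \<Longrightarrow> (g \<longlongrightarrow> b) F \<Longrightarrow> ((\<lambda>n. gauss_kernel s (f n) (g n)) \<longlongrightarrow> gauss_kernel s a b) F"
  unfolding gauss_kernel_def divide_inverse by (intro tendsto_intros)

lemma dirac_comb_integral: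
  fixes f :: "'a::euclidean_space \<Rightarrow> real"
  assumes "f \<in> borel_measurable borel" "\<forall>q<Q. 0 \<le> \<alpha> q"
  shows "integral\<^sup>L (dirac_comb Q \<alpha> X) f = (\<Sum>q<Q. \<alpha> q * f (X q))"
proof -
  have m: "X \<in> measurable (point_measure {..<Q} (\<lambda>q. ennreal (\<alpha> q))) borel"
    by (simp add: point_measure_def)
  show ?thesis unfolding dirac_comb_def
    apply (subst integral_distr[OF m assms(1)])
    apply (subst lebesgue_integral_point_measure_finite)
    using assms by auto
qed

lemma gk_far:
  fixes f g :: "'b \<Rightarrow> 'a::real_normed_vector"
  assumes s: "s > 0" and f: "filterlim (\<lambda>n. norm (f n)) at_top F" and g: "(g \<longlongrightarrow> b) F"
  shows "((\<lambda>n. gauss_kernel s (f n) (g n)) \<longlongrightarrow> 0) F"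
proof -
  have "filterlim (\<lambda>n. (- norm (g n)) + norm (f n)) at_top F"
    by (rule filterlim_tendsto_add_at_top[OF tendsto_minus[OF tendsto_norm[OF g]] f])
  hence 1: "filterlim (\<lambda>n. norm (f n - g n)) at_top F"
    by (rule filterlim_at_top_mono) (auto intro!: always_eventually simp: norm_triangle_ineq2)
  have 2: "filterlim (\<lambda>n. (norm (f n - g n))\<^sup>2) at_top F"
    using filterlim_pow_at_top[OF _ 1, of 2] by simp
  have 3: "filterlim (\<lambda>n. (norm (f n - g n))\<^sup>2 / (2 * s\<^sup>2)) at_top F"
    using filterlim_tendsto_pos_mult_at_top[OF tendsto_const _ 2, of "1 / (2 * s ^ 2)"] s by simp
  have 4: "filterlim (\<lambda>n. - ((norm (f n - g n))\<^sup>2 / (2 * s\<^sup>2))) at_bot F"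
    using 3 by (simp add: filterlim_uminus_at_bot)
  show ?thesis unfolding gauss_kernel_def
    using filterlim_compose[OF exp_at_bot 4] by simp
qed

locale gsetting =
  fixes \<sigma> :: real and \<eta> :: "'a::euclidean_space measure"
  assumes sp: "\<sigma> > 0" and pr: "prob_space \<eta>" and se: "sets \<eta> = sets borel"
begin

definition "hk x = (\<integral>y. gauss_kernel \<sigma> x y \<partial>\<eta>)"

lemma meas_eta: "f \<in> borel_measurable \<eta> \<longleftrightarrow> f \<in> borel_measurable borel"
  by (metis measurable_cong_sets se)

lemma gk_meas1[measurable]: "(\<lambda>y. gauss_kernel s x y) \<in> borel_measurable borel"
  by (rule borel_measurable_continuous_onI) (unfold gauss_kernel_def divide_inverse, intro continuous_intros)
lemma gk_meas2[measurable]: "(\<lambda>y. gauss_kernel s y x) \<in> borel_measurable borel"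
  by (rule borel_measurable_continuous_onI) (unfold gauss_kernel_def divide_inverse, intro continuous_intros)

lemma gk_integrable: "integrable \<eta> (\<lambda>y. gauss_kernel s x y)"
proof -
  interpret prob_space \<eta> by (rule pr)
  show ?thesis
    apply (rule integrable_const_bound[where B=1])
    using gk_le1 by (auto simp: meas_eta abs_le_iff intro!: AE_I2)
qed

lemma hk_bounds: "0 \<le> hk x" "hk x \<le> 1"
proof -
  interpret prob_space \<eta> by (rule pr)
  show "0 \<le> hk x" unfolding hk_def by (rule integral_nonneg_AE) (simp add: less_imp_le gk_pos)
  have "hk x \<le> (\<integral>y. 1 \<partial>\<eta>)" unfolding hk_def
    by (rule integral_mono) (auto simp: gk_integrable gk_le1)
  thus "hk x \<le> 1" by (simp add: prob_space)
qed

lemma hk_tendsto: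
  assumes "x \<longlonglongrightarrow> a" shows "(\<lambda>n. hk (x n)) \<longlonglongrightarrow> hk a"
proof -
  interpret prob_space \<eta> by (rule pr)
  show ?thesis unfolding hk_def
    apply (rule integral_dominated_convergence[where w="\<lambda>_. 1"])
    using assms gk_le1
    by (auto intro!: tendsto_intros AE_I2 simp: meas_eta abs_le_iff)
qed

lemma hk_far:
  assumes "filterlim (\<lambda>n. norm (x n)) at_top sequentially" shows "(\<lambda>n. hk (x n)) \<longlonglongrightarrow> 0"
proof -
  interpret prob_space \<eta> by (rule pr)
  have "(\<lambda>n. (\<integral>y. gauss_kernel \<sigma> (x n) y \<partial>\<eta>)) \<longlonglongrightarrow> (\<integral>y. 0 \<partial>\<eta>)"
    apply (rule integral_dominated_convergence[where w="\<lambda>_. 1"])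
    using gk_le1 gk_far[OF sp assms tendsto_const]
    by (auto simp: meas_eta abs_le_iff intro!: AE_I2)
  thus ?thesis unfolding hk_def by simp
qed

lemma hk_cont: "continuous_on UNIV hk"
  using hk_tendsto by (auto simp: continuous_on_sequentially o_def)

lemma hk_meas[measurable]: "hk \<in> borel_measurable borel"
  using hk_cont by (rule borel_measurable_continuous_onI)

definition "Cc = (\<integral>x. hk x \<partial>\<eta>)"

definition "PhiS S \<beta> X = (\<Sum>p\<in>S. \<Sum>q\<in>S. \<beta> p * \<beta> q * gauss_kernel \<sigma> (X p) (X q))
   - 2 * (\<Sum>q\<in>S. \<beta> q * hk (X q)) + Cc"

definition "Phi Q \<beta> X = PhiS {..<Q} \<beta> X"

lemma gdist_eq:
  assumes "\<forall>q<Q. 0 \<le> \<beta> q"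
  shows "gdist2 \<sigma> (dirac_comb Q \<beta> X) \<eta> = Phi Q \<beta> X"
proof -
  have 1: "(\<lambda>x. \<integral>y. gauss_kernel \<sigma> x y \<partial>dirac_comb Q \<beta> X) = (\<lambda>x. \<Sum>q<Q. \<beta> q * gauss_kernel \<sigma> x (X q))"
    using dirac_comb_integral[OF gk_meas1 assms] by auto
  have 2: "(\<lambda>x. \<integral>y. gauss_kernel \<sigma> x y \<partial>\<eta>) = hk" unfolding hk_def by auto
  show ?thesis unfolding gdist2_def 1 2 Phi_def PhiS_def Cc_def
    apply (subst dirac_comb_integral[OF _ assms], measurable)
    apply (subst dirac_comb_integral[OF _ assms], measurable)
    by (simp add: sum_distrib_left mult.assoc)
qed


lemma gauss_1d: "(\<integral>\<^sup>+t. ennreal (exp (- t\<^sup>2 / (2 * \<sigma>\<^sup>2))) \<partial>lborel) = ennreal (sqrt (2 * pi * \<sigma>\<^sup>2))"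
proof -
  have pos: "0 < sqrt (2 * pi * \<sigma>\<^sup>2)" using sp by simp
  have "(\<lambda>t. ennreal (exp (- t\<^sup>2 / (2 * \<sigma>\<^sup>2)))) = (\<lambda>t. ennreal (sqrt (2 * pi * \<sigma>\<^sup>2)) * ennreal (normal_density 0 \<sigma> t))"
    using pos by (auto simp: normal_density_def ennreal_mult[symmetric] intro!: ext)
  hence "(\<integral>\<^sup>+t. ennreal (exp (- t\<^sup>2 / (2 * \<sigma>\<^sup>2))) \<partial>lborel) = ennreal (sqrt (2 * pi * \<sigma>\<^sup>2)) * (\<integral>\<^sup>+t. ennreal (normal_density 0 \<sigma> t) \<partial>lborel)"
    by (simp add: nn_integral_cmult)
  also have "(\<integral>\<^sup>+t. ennreal (normal_density 0 \<sigma> t) \<partial>lborel) = 1"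
    by (subst nn_integral_eq_integral) (auto simp: integrable_normal_density[OF sp] integral_normal_density[OF sp])
  finally show ?thesis by simp
qed

definition "cg = sqrt (2 * pi * \<sigma>\<^sup>2) ^ DIM('a)"

lemma cg_pos: "cg > 0" unfolding cg_def using sp by simp

lemma gk_lborel0: "(\<integral>\<^sup>+y. ennreal (gauss_kernel \<sigma> 0 y) \<partial>(lborel::'a measure)) = ennreal cg"
proof -
  have "\<And>y::'a. gauss_kernel \<sigma> 0 y = (\<Prod>b\<in>Basis. exp (- (y \<bullet> b)\<^sup>2 / (2 * \<sigma>\<^sup>2)))"
  proof -
    fix y :: 'a
    have "(norm y)\<^sup>2 = y \<bullet> y" by (rule power2_norm_eq_inner)
    also have "\<dots> = (\<Sum>b\<in>Basis. (y \<bullet> b) * (y \<bullet> b))" by (rule euclidean_inner)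
    finally have "(norm y)\<^sup>2 = (\<Sum>b\<in>Basis. (y \<bullet> b)\<^sup>2)" by (simp add: power2_eq_square)
    hence "- (norm (0 - y))\<^sup>2 / (2 * \<sigma>\<^sup>2) = (\<Sum>b\<in>Basis. - (y \<bullet> b)\<^sup>2 / (2 * \<sigma>\<^sup>2))"
      by (simp add: sum_divide_distrib sum_negf)
    thus "gauss_kernel \<sigma> 0 y = (\<Prod>b\<in>Basis. exp (- (y \<bullet> b)\<^sup>2 / (2 * \<sigma>\<^sup>2)))"
      unfolding gauss_kernel_def by (simp add: exp_sum)
  qed
  hence "(\<integral>\<^sup>+y. ennreal (gauss_kernel \<sigma> 0 y) \<partial>(lborel::'a measure))
     = (\<integral>\<^sup>+y. (\<Prod>b\<in>Basis. ennreal (exp (- (y \<bullet> b)\<^sup>2 / (2 * \<sigma>\<^sup>2)))) \<partial>(lborel::'a measure))"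
    by (simp add: prod_ennreal)
  also have "\<dots> = (\<Prod>b\<in>(Basis::'a set). (\<integral>\<^sup>+t. ennreal (exp (- t\<^sup>2 / (2 * \<sigma>\<^sup>2))) \<partial>lborel))"
    by (rule nn_integral_lborel_prod) auto
  also have "\<dots> = ennreal cg"
    unfolding gauss_1d cg_def by (simp add: prod_ennreal ennreal_power)
  finally show ?thesis .
qed

lemma gk_lborel: "(\<integral>\<^sup>+y. ennreal (gauss_kernel \<sigma> x y) \<partial>(lborel::'a measure)) = ennreal cg"
proof -
  have "(\<integral>\<^sup>+y. ennreal (gauss_kernel \<sigma> x y) \<partial>(lborel::'a measure))
      = (\<integral>\<^sup>+y. ennreal (gauss_kernel \<sigma> x y) \<partial>(distr lborel borel ((+) x)))"
    by (simp add: lborel_distr_plus)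
  also have "\<dots> = (\<integral>\<^sup>+y. ennreal (gauss_kernel \<sigma> x (x + y)) \<partial>(lborel::'a measure))"
    by (subst nn_integral_distr) auto
  also have "\<dots> = (\<integral>\<^sup>+y. ennreal (gauss_kernel \<sigma> 0 y) \<partial>(lborel::'a measure))"
    by (simp add: gauss_kernel_def)
  finally show ?thesis using gk_lborel0 by simp
qed

lemma hk_lborel: "(\<integral>\<^sup>+y. ennreal (hk y) \<partial>(lborel::'a measure)) = ennreal cg"
proof -
  interpret pr: prob_space \<eta> by (rule pr)
  interpret pair_sigma_finite \<eta> "lborel::'a measure"
    by (intro pair_sigma_finite.intro prob_space_imp_sigma_finite pr sigma_finite_lborel)
  have 1: "\<And>y. ennreal (hk y) = (\<integral>\<^sup>+x. ennreal (gauss_kernel \<sigma> y x) \<partial>\<eta>)"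
    unfolding hk_def by (subst nn_integral_eq_integral) (auto simp: gk_integrable)
  have m: "(\<lambda>(x, y). ennreal (gauss_kernel \<sigma> y x)) \<in> borel_measurable (\<eta> \<Otimes>\<^sub>M lborel)"
  proof -
    have "sets (\<eta> \<Otimes>\<^sub>M (lborel::'a measure)) = sets (borel \<Otimes>\<^sub>M (borel::'a measure))"
      by (rule sets_pair_measure_cong) (auto simp: se)
    also have "\<dots> = sets (borel :: ('a \<times> 'a) measure)" by (metis borel_prod)
    finally have e: "sets (\<eta> \<Otimes>\<^sub>M (lborel::'a measure)) = sets (borel :: ('a \<times> 'a) measure)" .
    have "(\<lambda>p. gauss_kernel \<sigma> (snd p) (fst p)) \<in> borel_measurable (borel :: ('a \<times> 'a) measure)"
      by (rule borel_measurable_continuous_onI) (unfold gauss_kernel_def divide_inverse, intro continuous_intros)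
    hence "(\<lambda>p. ennreal (gauss_kernel \<sigma> (snd p) (fst p))) \<in> borel_measurable (borel :: ('a \<times> 'a) measure)"
      by measurable
    thus ?thesis by (simp add: case_prod_beta' measurable_cong_sets[OF e refl])
  qed
  have "(\<integral>\<^sup>+y. ennreal (hk y) \<partial>(lborel::'a measure)) = (\<integral>\<^sup>+y. (\<integral>\<^sup>+x. ennreal (gauss_kernel \<sigma> y x) \<partial>\<eta>) \<partial>lborel)"
    by (simp add: 1)
  also have "\<dots> = (\<integral>\<^sup>+x. (\<integral>\<^sup>+y. ennreal (gauss_kernel \<sigma> y x) \<partial>lborel) \<partial>\<eta>)"
    by (rule Fubini'[OF m])
  also have "\<dots> = (\<integral>\<^sup>+x. ennreal cg \<partial>\<eta>)"
    using gk_lborel by (simp add: gk_sym[of \<sigma> _ ])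
  also have "\<dots> = ennreal cg" by (simp add: pr.emeasure_space_1)
  finally show ?thesis .
qed

lemma witness:
  assumes "finite B" "\<forall>p\<in>B. 0 \<le> b p" "(\<Sum>p\<in>B. b p) < 1"
  shows "\<exists>y. (\<Sum>p\<in>B. b p * gauss_kernel \<sigma> (x p) y) < hk y"
proof (rule ccontr)
  assume "\<not> ?thesis"
  hence le: "\<And>y. hk y \<le> (\<Sum>p\<in>B. b p * gauss_kernel \<sigma> (x p) y)" by (auto simp: not_less)
  have "ennreal cg = (\<integral>\<^sup>+y. ennreal (hk y) \<partial>(lborel::'a measure))" by (simp add: hk_lborel)
  also have "\<dots> \<le> (\<integral>\<^sup>+y. ennreal (\<Sum>p\<in>B. b p * gauss_kernel \<sigma> (x p) y) \<partial>(lborel::'a measure))"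
    by (rule nn_integral_mono) (simp add: le ennreal_leI)
  also have "\<dots> = (\<integral>\<^sup>+y. (\<Sum>p\<in>B. ennreal (b p) * ennreal (gauss_kernel \<sigma> (x p) y)) \<partial>(lborel::'a measure))"
    using assms(2) by (simp add: sum_ennreal[symmetric] ennreal_mult)
  also have "\<dots> = (\<Sum>p\<in>B. ennreal (b p) * ennreal cg)"
    by (subst nn_integral_sum) (auto simp: nn_integral_cmult gk_lborel)
  also have "\<dots> = ennreal ((\<Sum>p\<in>B. b p) * cg)"
    using assms(2) cg_pos by (simp add: sum_ennreal[symmetric] ennreal_mult sum_distrib_right)
  finally have "cg \<le> (\<Sum>p\<in>B. b p) * cg" using cg_pos by (simp add: ennreal_le_iff2)
  thus False using cg_pos assms(3) by (simp add: mult_le_cancel_right1)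
qed

end



lemma single_extract:
  fixes x :: "nat \<Rightarrow> 'a::euclidean_space"
  shows "\<exists>r. strict_mono r \<and> ((\<exists>l. (\<lambda>n. x (r n)) \<longlonglongrightarrow> l) \<or> filterlim (\<lambda>n. norm (x (r n))) at_top sequentially)"
proof -
  obtain r0 where r0: "strict_mono r0" "monoseq (\<lambda>n. norm (x (r0 n)))"
    using seq_monosub[of "\<lambda>n. norm (x n)"] by blast
  show ?thesis
  proof (cases "\<exists>M. \<forall>n. norm (x (r0 n)) \<le> M")
    case True
    then obtain M where M: "\<And>n. norm (x (r0 n)) \<le> M" by blast
    have bd: "bounded (range (\<lambda>n. x (r0 n)))"
      unfolding bounded_iff using M by blast
    then obtain l r1 where r1: "strict_mono r1" "((\<lambda>n. x (r0 n)) \<circ> r1) \<longlonglongrightarrow> l"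
      using bounded_imp_convergent_subsequence[OF bd] by blast
    have A1: "strict_mono (r0 \<circ> r1)" using r0(1) r1(1) by (rule strict_mono_o)
    have A2: "(\<lambda>n. x ((r0 \<circ> r1) n)) \<longlonglongrightarrow> l" using r1(2) by (simp add: o_def)
    show ?thesis
      apply (rule exI[of _ "r0 \<circ> r1"], rule conjI[OF A1], rule disjI1, rule exI[of _ l])
      by (rule A2)
  next
    case False
    hence unb: "\<And>M. \<exists>n. M < norm (x (r0 n))" by (auto simp: not_le)
    have "incseq (\<lambda>n. norm (x (r0 n)))"
    proof -
      { assume d: "decseq (\<lambda>n. norm (x (r0 n)))"
        have "\<forall>n. norm (x (r0 n)) \<le> norm (x (r0 0))" using d unfolding decseq_def by blast
        hence False using False by blast }
      thus ?thesis using r0(2) unfolding monoseq_iff by blast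
    qed
    hence "filterlim (\<lambda>n. norm (x (r0 n))) at_top sequentially"
      unfolding filterlim_at_top eventually_sequentially
    proof (intro allI)
      fix Z assume inc: "incseq (\<lambda>n. norm (x (r0 n)))"
      obtain N where "Z < norm (x (r0 N))" using unb by blast
      hence "\<forall>n\<ge>N. Z \<le> norm (x (r0 n))" using inc unfolding incseq_def by (meson less_imp_le order.trans)
      thus "\<exists>N. \<forall>n\<ge>N. Z \<le> norm (x (r0 n))" by blast
    qed
    thus ?thesis
      by (intro exI[of _ r0] conjI[OF r0(1)] disjI2)
  qed
qed



lemma seq_extract:
  fixes Xs :: "nat \<Rightarrow> nat \<Rightarrow> 'a::euclidean_space" and bs :: "nat \<Rightarrow> nat \<Rightarrow> real"
  assumes "finite S" "\<And>n q. q\<in>S \<Longrightarrow> \<bar>bs n q\<bar> \<le> 1"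
  shows "\<exists>r B. strict_mono r \<and> B \<subseteq> S \<and> (\<forall>q\<in>S. \<exists>l. (\<lambda>n. bs (r n) q) \<longlonglongrightarrow> l)
     \<and> (\<forall>q\<in>B. \<exists>l. (\<lambda>n. Xs (r n) q) \<longlonglongrightarrow> l)
     \<and> (\<forall>q\<in>S-B. filterlim (\<lambda>n. norm (Xs (r n) q)) at_top sequentially)"
  using assms
proof (induction S rule: finite_induct)
  case empty
  show ?case by (rule exI[of _ id], rule exI[of _ "{}"]) (auto simp: strict_mono_def)
next
  case (insert q S)
  then obtain r B where r: "strict_mono r" "B \<subseteq> S" "\<forall>q\<in>S. \<exists>l. (\<lambda>n. bs (r n) q) \<longlonglongrightarrow> l"
     "\<forall>q\<in>B. \<exists>l. (\<lambda>n. Xs (r n) q) \<longlonglongrightarrow> l"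
     "\<forall>q\<in>S-B. filterlim (\<lambda>n. norm (Xs (r n) q)) at_top sequentially" by auto
  have bd: "bounded (range (\<lambda>n. bs (r n) q))"
    unfolding bounded_iff by (intro exI[of _ 1]) (auto intro: insert.prems)
  obtain l1 r1 where r1: "strict_mono r1" "((\<lambda>n. bs (r n) q) \<circ> r1) \<longlonglongrightarrow> l1"
    using bounded_imp_convergent_subsequence[OF bd] by blast
  obtain r2 where r2: "strict_mono r2" "(\<exists>l. (\<lambda>n. Xs (r (r1 (r2 n))) q) \<longlonglongrightarrow> l) \<or> filterlim (\<lambda>n. norm (Xs (r (r1 (r2 n))) q)) at_top sequentially"
    using single_extract[of "\<lambda>n. Xs (r (r1 n)) q"] by blast
  define R where "R = r \<circ> r1 \<circ> r2"
  have R: "strict_mono R" unfolding R_def using r r1 r2 by (intro strict_mono_o)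
  have sub: "strict_mono (r1 \<circ> r2)" using r1 r2 by (intro strict_mono_o)
  have c1: "\<And>f l. (\<lambda>n. f (r n)) \<longlonglongrightarrow> l \<Longrightarrow> (\<lambda>n. f (R n)) \<longlonglongrightarrow> l"
    using LIMSEQ_subseq_LIMSEQ[OF _ sub] unfolding R_def by (auto simp: o_def)
  have c2: "\<And>f. filterlim (\<lambda>n. f (r n)) at_top sequentially \<Longrightarrow> filterlim (\<lambda>n. f (R n)) at_top sequentially"
    using filterlim_compose[OF _ filterlim_subseq[OF sub]] unfolding R_def by (auto simp: o_def)
  have bq: "(\<lambda>n. bs (R n) q) \<longlonglongrightarrow> l1"
    using LIMSEQ_subseq_LIMSEQ[OF r1(2) r2(1)] unfolding R_def by (auto simp: o_def)
  show ?case
  proof (cases "\<exists>l. (\<lambda>n. Xs (r (r1 (r2 n))) q) \<longlonglongrightarrow> l")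
    case True
    have F1: "(\<forall>q'\<in>insert q S. \<exists>l. (\<lambda>n. bs (R n) q') \<longlonglongrightarrow> l)"
      using r(3) c1[of "\<lambda>m. bs m _"] bq by blast
    have F2: "\<forall>q'\<in>insert q B. \<exists>l. (\<lambda>n. Xs (R n) q') \<longlonglongrightarrow> l"
    proof -
      have "\<exists>l. (\<lambda>n. Xs (R n) q) \<longlonglongrightarrow> l" using True unfolding R_def by (simp add: o_def)
      thus ?thesis using r(4) c1[of "\<lambda>m. Xs m _"] by blast
    qed
    have F3: "\<forall>q'\<in>insert q S - insert q B. filterlim (\<lambda>n. norm (Xs (R n) q')) at_top sequentially"
      using r(5) c2[of "\<lambda>m. norm (Xs m _)"] by blast
    show ?thesis
      apply (rule exI[of _ R], rule exI[of _ "insert q B"])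
      apply (intro conjI)
          apply (fact R)
      using r(2) apply blast
        apply (fact F1)
       apply (fact F2)
      apply (fact F3)
      done
  next
    case False
    with r2 have f: "filterlim (\<lambda>n. norm (Xs (r (r1 (r2 n))) q)) at_top sequentially" by blast
    have F1: "(\<forall>q'\<in>insert q S. \<exists>l. (\<lambda>n. bs (R n) q') \<longlonglongrightarrow> l)"
      using r(3) c1[of "\<lambda>m. bs m _"] bq by blast
    have F2: "\<forall>q'\<in>B. \<exists>l. (\<lambda>n. Xs (R n) q') \<longlonglongrightarrow> l"
      using r(4) c1[of "\<lambda>m. Xs m _"] by blast
    have F3: "\<forall>q'\<in>insert q S - B. filterlim (\<lambda>n. norm (Xs (R n) q')) at_top sequentially"
    proof
      fix q' assume q': "q' \<in> insert q S - B"
      show "filterlim (\<lambda>n. norm (Xs (R n) q')) at_top sequentially"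
      proof (cases "q' = q")
        case True
        thus ?thesis using f unfolding R_def by (simp add: o_def)
      next
        case False
        hence "q' \<in> S - B" using q' by simp
        thus ?thesis using r(5) c2[of "\<lambda>m. norm (Xs m q')"] by blast
      qed
    qed
    show ?thesis
      apply (rule exI[of _ R], rule exI[of _ B])
      apply (intro conjI)
          apply (fact R)
      using r(2) apply blast
        apply (fact F1)
       apply (fact F2)
      apply (fact F3)
      done
  qed
qed



context gsetting begin

lemma decomp:
  assumes "finite S" "B \<subseteq> S"
  shows "PhiS S b X = PhiS B b X
    + (\<Sum>p\<in>S-B. \<Sum>q\<in>S-B. b p * b q * gauss_kernel \<sigma> (X p) (X q))
    + 2 * (\<Sum>p\<in>B. \<Sum>q\<in>S-B. b p * b q * gauss_kernel \<sigma> (X p) (X q))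
    - 2 * (\<Sum>q\<in>S-B. b q * hk (X q))"
proof -
  define f where "f p q = b p * b q * gauss_kernel \<sigma> (X p) (X q)" for p q
  have fs: "f p q = f q p" for p q unfolding f_def by (simp add: gk_sym mult.commute mult.left_commute)
  have split: "\<And>g. sum g S = sum g (S - B) + sum g B"
    using assms by (simp add: sum.subset_diff)
  have "(\<Sum>p\<in>S. \<Sum>q\<in>S. f p q) = (\<Sum>p\<in>S. (\<Sum>q\<in>S-B. f p q) + (\<Sum>q\<in>B. f p q))"
    by (subst split) simp
  also have "\<dots> = (\<Sum>p\<in>S-B. \<Sum>q\<in>S-B. f p q) + (\<Sum>p\<in>B. \<Sum>q\<in>S-B. f p q)
     + (\<Sum>p\<in>S-B. \<Sum>q\<in>B. f p q) + (\<Sum>p\<in>B. \<Sum>q\<in>B. f p q)"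
    by (subst split) (simp add: sum.distrib)
  also have "(\<Sum>p\<in>S-B. \<Sum>q\<in>B. f p q) = (\<Sum>p\<in>B. \<Sum>q\<in>S-B. f p q)"
    by (subst sum.swap) (simp add: fs)
  finally have 1: "(\<Sum>p\<in>S. \<Sum>q\<in>S. f p q) = (\<Sum>p\<in>B. \<Sum>q\<in>B. f p q) + (\<Sum>p\<in>S-B. \<Sum>q\<in>S-B. f p q)
      + 2 * (\<Sum>p\<in>B. \<Sum>q\<in>S-B. f p q)" by simp
  have 2: "(\<Sum>q\<in>S. b q * hk (X q)) = (\<Sum>q\<in>B. b q * hk (X q)) + (\<Sum>q\<in>S-B. b q * hk (X q))"
    by (subst split) simp
  show ?thesis unfolding PhiS_def using 1 2 unfolding f_def by simp
qed

lemma PhiS_cong: "(\<And>q. q \<in> S \<Longrightarrow> X q = Y q) \<Longrightarrow> PhiS S b X = PhiS S b Y"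
  unfolding PhiS_def by (intro arg_cong2[where f="(+)"] arg_cong2[where f="(-)"] arg_cong2[where f="(*)"] sum.cong) auto

lemma PhiS_tendsto:
  assumes "\<And>q. q \<in> S \<Longrightarrow> (\<lambda>n. bn n q) \<longlonglongrightarrow> b q" "\<And>q. q \<in> S \<Longrightarrow> (\<lambda>n. Xn n q) \<longlonglongrightarrow> x q"
  shows "(\<lambda>n. PhiS S (bn n) (Xn n)) \<longlonglongrightarrow> PhiS S b x"
  unfolding PhiS_def using assms by (intro tendsto_intros hk_tendsto) auto

lemma diag_le:
  assumes "finite E" "\<And>q. q \<in> E \<Longrightarrow> 0 \<le> b q"
  shows "(\<Sum>q\<in>E. (b q)\<^sup>2) \<le> (\<Sum>p\<in>E. \<Sum>q\<in>E. b p * b q * gauss_kernel \<sigma> (X p) (X q))"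
proof (rule sum_mono)
  fix p assume p: "p \<in> E"
  have "b p * b p * gauss_kernel \<sigma> (X p) (X p) \<le> (\<Sum>q\<in>E. b p * b q * gauss_kernel \<sigma> (X p) (X q))"
    by (rule member_le_sum[OF p]) (use assms p in \<open>auto intro!: mult_nonneg_nonneg\<close>)
  thus "(b p)\<^sup>2 \<le> (\<Sum>q\<in>E. b p * b q * gauss_kernel \<sigma> (X p) (X q))"
    by (simp add: gk_same power2_eq_square)
qed

lemma diag_split:
  assumes "finite E"
  shows "(\<Sum>p\<in>E. \<Sum>q\<in>E. b p * b q * gauss_kernel \<sigma> (X p) (X q))
     = (\<Sum>q\<in>E. (b q)\<^sup>2) + (\<Sum>p\<in>E. \<Sum>q\<in>E-{p}. b p * b q * gauss_kernel \<sigma> (X p) (X q))"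
proof -
  have "\<And>p. p \<in> E \<Longrightarrow> (\<Sum>q\<in>E. b p * b q * gauss_kernel \<sigma> (X p) (X q))
     = (b p)\<^sup>2 + (\<Sum>q\<in>E-{p}. b p * b q * gauss_kernel \<sigma> (X p) (X q))"
    using assms by (subst sum.remove) (auto simp: gk_same power2_eq_square)
  thus ?thesis by (simp add: sum.distrib)
qed

end


context gsetting begin

lemma simplex_bounds: "\<gamma> \<in> prob_simplex Q \<Longrightarrow> q < Q \<Longrightarrow> 0 \<le> \<gamma> q \<and> \<gamma> q \<le> 1"
  unfolding prob_simplex_def
  using member_le_sum[of q "{..<Q}" \<gamma>] by auto

lemma Phi_lower: "\<gamma> \<in> prob_simplex Q \<Longrightarrow> Cc - 2 \<le> Phi Q \<gamma> Y"
proof -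
  assume g: "\<gamma> \<in> prob_simplex Q"
  have 1: "0 \<le> (\<Sum>p<Q. \<Sum>q<Q. \<gamma> p * \<gamma> q * gauss_kernel \<sigma> (Y p) (Y q))"
    using simplex_bounds[OF g] by (intro sum_nonneg) auto
  have "(\<Sum>q<Q. \<gamma> q * hk (Y q)) \<le> (\<Sum>q<Q. \<gamma> q)"
    using simplex_bounds[OF g] hk_bounds by (intro sum_mono) (simp add: mult_left_le)
  also have "\<dots> = 1" using g by (simp add: prob_simplex_def)
  finally show ?thesis using 1 unfolding Phi_def PhiS_def by simp
qed

lemma gk_shift: "gauss_kernel s u v = gauss_kernel s (u - v) 0"
  by (simp add: gauss_kernel_def)

lemma main:
  assumes AS: "A \<subseteq> prob_simplex Q" and Ane: "A \<noteq> {}"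
    and Acl: "\<And>\<beta>s b. (\<forall>n. \<beta>s n \<in> A) \<Longrightarrow> (\<forall>q<Q. (\<lambda>n. \<beta>s n q) \<longlonglongrightarrow> b q) \<Longrightarrow> \<exists>\<beta>'\<in>A. \<forall>q<Q. \<beta>' q = b q"
  shows "\<exists>X. \<exists>\<beta>\<in>A. \<forall>Y. \<forall>\<gamma>\<in>A. Phi Q \<beta> X \<le> Phi Q \<gamma> Y"
proof -
  define V where "V = {Phi Q \<gamma> Y | \<gamma> Y. \<gamma> \<in> A}"
  have Vne: "V \<noteq> {}" using Ane unfolding V_def by auto
  have bdd: "bdd_below V" unfolding V_def bdd_below_def using Phi_lower AS by blast
  define m where "m = Inf V"
  have mle: "\<And>\<gamma> Y. \<gamma> \<in> A \<Longrightarrow> m \<le> Phi Q \<gamma> Y"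
    unfolding m_def by (rule cInf_lower) (use bdd in \<open>auto simp: V_def\<close>)
  have "\<forall>n. \<exists>\<gamma> Y. \<gamma> \<in> A \<and> Phi Q \<gamma> Y < m + 1 / real (Suc n)"
  proof
    fix n
    have "Inf V < m + 1 / real (Suc n)" unfolding m_def by simp
    then obtain v where "v \<in> V" "v < m + 1 / real (Suc n)" using cInf_less_iff[OF Vne bdd] by blast
    thus "\<exists>\<gamma> Y. \<gamma> \<in> A \<and> Phi Q \<gamma> Y < m + 1 / real (Suc n)" unfolding V_def by auto
  qed
  then obtain \<beta>s Xs where seq: "\<And>n. \<beta>s n \<in> A" "\<And>n. Phi Q (\<beta>s n) (Xs n) < m + 1 / real (Suc n)"
    by metis
  have conv: "(\<lambda>n. Phi Q (\<beta>s n) (Xs n)) \<longlonglongrightarrow> m"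
  proof (rule tendsto_sandwich[of "\<lambda>_. m" _ _ "\<lambda>n. m + 1 / real (Suc n)"])
    show "\<forall>\<^sub>F n in sequentially. m \<le> Phi Q (\<beta>s n) (Xs n)" using mle seq(1) by simp
    show "\<forall>\<^sub>F n in sequentially. Phi Q (\<beta>s n) (Xs n) \<le> m + 1 / real (Suc n)"
      using seq(2) by (simp add: less_imp_le)
    have l0: "(\<lambda>n. 1 / real (Suc n)) \<longlonglongrightarrow> 0" using LIMSEQ_Suc[OF lim_1_over_n] by simp
    show "(\<lambda>n. m + 1 / real (Suc n)) \<longlonglongrightarrow> m" using tendsto_add[OF tendsto_const l0, of m] by simp
  qed simp
  have bsnn: "\<And>n q. q < Q \<Longrightarrow> 0 \<le> \<beta>s n q \<and> \<beta>s n q \<le> 1" using simplex_bounds seq(1) AS by blast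
  have bnd: "\<And>n q. q \<in> {..<Q} \<Longrightarrow> \<bar>\<beta>s n q\<bar> \<le> 1" using bsnn by (simp add: abs_le_iff)
  obtain r B where r: "strict_mono r" "B \<subseteq> {..<Q}" "\<forall>q\<in>{..<Q}. \<exists>l. (\<lambda>n. \<beta>s (r n) q) \<longlonglongrightarrow> l"
     "\<forall>q\<in>B. \<exists>l. (\<lambda>n. Xs (r n) q) \<longlonglongrightarrow> l"
     "\<forall>q\<in>{..<Q}-B. filterlim (\<lambda>n. norm (Xs (r n) q)) at_top sequentially"
    using seq_extract[of "{..<Q}" \<beta>s Xs] bnd by blast
  obtain bl where bl: "\<forall>q\<in>{..<Q}. (\<lambda>n. \<beta>s (r n) q) \<longlonglongrightarrow> bl q" using bchoice[OF r(3)] by blast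
  obtain \<beta> where \<beta>: "\<beta> \<in> A" "\<forall>q<Q. \<beta> q = bl q" using Acl[of "\<lambda>n. \<beta>s (r n)" bl] seq(1) bl by auto
  have bconv: "\<And>q. q < Q \<Longrightarrow> (\<lambda>n. \<beta>s (r n) q) \<longlonglongrightarrow> \<beta> q" using bl \<beta> by simp
  obtain x where x: "\<forall>q\<in>B. (\<lambda>n. Xs (r n) q) \<longlonglongrightarrow> x q" using bchoice[OF r(4)] by blast
  define E where "E = {..<Q} - B"
  have \<beta>simp: "\<beta> \<in> prob_simplex Q" using \<beta> AS by auto
  have bnn: "\<And>q. q < Q \<Longrightarrow> 0 \<le> \<beta> q" using simplex_bounds[OF \<beta>simp] by auto
  have finB: "finite B" using r(2) finite_subset by blast
  define T where "T n = PhiS B (\<beta>s (r n)) (Xs (r n)) + (\<Sum>q\<in>E. (\<beta>s (r n) q)\<^sup>2)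
     + 2 * (\<Sum>p\<in>B. \<Sum>q\<in>E. \<beta>s (r n) p * \<beta>s (r n) q * gauss_kernel \<sigma> (Xs (r n) p) (Xs (r n) q))
     - 2 * (\<Sum>q\<in>E. \<beta>s (r n) q * hk (Xs (r n) q))" for n
  have TleP: "T n \<le> Phi Q (\<beta>s (r n)) (Xs (r n))" for n
  proof -
    have "Phi Q (\<beta>s (r n)) (Xs (r n)) = PhiS B (\<beta>s (r n)) (Xs (r n))
      + (\<Sum>p\<in>E. \<Sum>q\<in>E. \<beta>s (r n) p * \<beta>s (r n) q * gauss_kernel \<sigma> (Xs (r n) p) (Xs (r n) q))
      + 2 * (\<Sum>p\<in>B. \<Sum>q\<in>E. \<beta>s (r n) p * \<beta>s (r n) q * gauss_kernel \<sigma> (Xs (r n) p) (Xs (r n) q))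
      - 2 * (\<Sum>q\<in>E. \<beta>s (r n) q * hk (Xs (r n) q))"
      unfolding Phi_def E_def by (rule decomp) (use r(2) in auto)
    moreover have "(\<Sum>q\<in>E. (\<beta>s (r n) q)\<^sup>2) \<le> (\<Sum>p\<in>E. \<Sum>q\<in>E. \<beta>s (r n) p * \<beta>s (r n) q * gauss_kernel \<sigma> (Xs (r n) p) (Xs (r n) q))"
      by (rule diag_le) (auto simp: E_def bsnn)
    ultimately show ?thesis unfolding T_def by simp
  qed
  define L where "L = PhiS B \<beta> x + (\<Sum>q\<in>E. (\<beta> q)\<^sup>2)"
  have far: "\<And>q. q \<in> E \<Longrightarrow> filterlim (\<lambda>n. norm (Xs (r n) q)) at_top sequentially"
    using r(5) E_def by auto
  have Tconv: "T \<longlonglongrightarrow> L"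
  proof -
    have 1: "(\<lambda>n. PhiS B (\<beta>s (r n)) (Xs (r n))) \<longlonglongrightarrow> PhiS B \<beta> x"
      by (rule PhiS_tendsto) (use bconv x r(2) in auto)
    have 2: "(\<lambda>n. \<Sum>q\<in>E. (\<beta>s (r n) q)\<^sup>2) \<longlonglongrightarrow> (\<Sum>q\<in>E. (\<beta> q)\<^sup>2)"
      by (intro tendsto_intros) (auto simp: E_def bconv)
    have 3: "(\<lambda>n. \<Sum>p\<in>B. \<Sum>q\<in>E. \<beta>s (r n) p * \<beta>s (r n) q * gauss_kernel \<sigma> (Xs (r n) p) (Xs (r n) q))
        \<longlonglongrightarrow> (\<Sum>p\<in>B. \<Sum>q\<in>E. \<beta> p * \<beta> q * 0)"
    proof (intro tendsto_sum tendsto_mult)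
      fix p q assume pq: "p \<in> B" "q \<in> E"
      show "(\<lambda>n. \<beta>s (r n) p) \<longlonglongrightarrow> \<beta> p" using bconv pq r(2) by auto
      show "(\<lambda>n. \<beta>s (r n) q) \<longlonglongrightarrow> \<beta> q" using bconv pq by (auto simp: E_def)
      show "(\<lambda>n. gauss_kernel \<sigma> (Xs (r n) p) (Xs (r n) q)) \<longlonglongrightarrow> 0"
        using gk_far[OF sp far[OF pq(2)] x[rule_format, OF pq(1)]] by (simp add: gk_sym)
    qed
    have 4: "(\<lambda>n. \<Sum>q\<in>E. \<beta>s (r n) q * hk (Xs (r n) q)) \<longlonglongrightarrow> (\<Sum>q\<in>E. \<beta> q * 0)"
    proof (intro tendsto_sum tendsto_mult)
      fix q assume q: "q \<in> E"
      show "(\<lambda>n. \<beta>s (r n) q) \<longlonglongrightarrow> \<beta> q" using bconv q by (auto simp: E_def)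
      show "(\<lambda>n. hk (Xs (r n) q)) \<longlonglongrightarrow> 0" by (rule hk_far[OF far[OF q]])
    qed
    have "T \<longlonglongrightarrow> PhiS B \<beta> x + (\<Sum>q\<in>E. (\<beta> q)\<^sup>2) + 2 * (\<Sum>p\<in>B. \<Sum>q\<in>E. \<beta> p * \<beta> q * 0) - 2 * (\<Sum>q\<in>E. \<beta> q * 0)"
      unfolding T_def by (intro tendsto_diff tendsto_add tendsto_mult tendsto_const 1 2 3 4)
    thus ?thesis unfolding L_def by simp
  qed
  have conv': "(\<lambda>n. Phi Q (\<beta>s (r n)) (Xs (r n))) \<longlonglongrightarrow> m"
    using LIMSEQ_subseq_LIMSEQ[OF conv r(1)] by (simp add: o_def)
  have Lm: "L \<le> m" by (rule LIMSEQ_le[OF Tconv conv']) (use TleP in auto)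
  show ?thesis
  proof (cases "\<forall>q\<in>E. \<beta> q = 0")
    case True
    define Xst where "Xst q = (if q \<in> B then x q else 0)" for q
    have "Phi Q \<beta> Xst = PhiS B \<beta> Xst
      + (\<Sum>p\<in>E. \<Sum>q\<in>E. \<beta> p * \<beta> q * gauss_kernel \<sigma> (Xst p) (Xst q))
      + 2 * (\<Sum>p\<in>B. \<Sum>q\<in>E. \<beta> p * \<beta> q * gauss_kernel \<sigma> (Xst p) (Xst q))
      - 2 * (\<Sum>q\<in>E. \<beta> q * hk (Xst q))"
      unfolding Phi_def E_def by (rule decomp) (use r(2) in auto)
    also have "\<dots> = PhiS B \<beta> Xst" using True by simp
    also have "PhiS B \<beta> Xst = PhiS B \<beta> x" by (rule PhiS_cong) (simp add: Xst_def)
    also have "\<dots> = L" using True by (simp add: L_def)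
    finally have "Phi Q \<beta> Xst \<le> m" using Lm by simp
    thus ?thesis using mle \<beta>(1) by (meson order.trans)
  next
    case False
    then obtain q0 where q0: "q0 \<in> E" "\<beta> q0 \<noteq> 0" by blast
    have q0Q: "q0 < Q" "q0 \<notin> B" using q0 E_def by auto
    have bq0: "0 < \<beta> q0" using bnn[OF q0Q(1)] q0(2) by simp
    have "(\<Sum>p\<in>B. \<beta> p) + \<beta> q0 = (\<Sum>p\<in>insert q0 B. \<beta> p)" using q0Q finB by simp
    also have "\<dots> \<le> (\<Sum>p<Q. \<beta> p)" by (rule sum_mono2) (use r(2) q0Q bnn in auto)
    also have "\<dots> = 1" using \<beta>simp by (simp add: prob_simplex_def)
    finally have sB: "(\<Sum>p\<in>B. \<beta> p) < 1" using bq0 by simp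
    obtain y where y: "(\<Sum>p\<in>B. \<beta> p * gauss_kernel \<sigma> (x p) y) < hk y"
      using witness[OF finB _ sB, of x] bnn r(2) by auto
    obtain e :: 'a where e: "norm e = 1" using norm_Basis nonempty_Basis by blast
    define B' where "B' = insert q0 B"
    define E' where "E' = {..<Q} - B'"
    define Z where "Z n q = (if q \<in> B then x q else if q = q0 then y else (real (Suc q) * real n) *\<^sub>R e)" for n q
    define Zc where "Zc q = (if q \<in> B then x q else y)" for q
    define K where "K = PhiS B' \<beta> Zc"
    have B'Q: "B' \<subseteq> {..<Q}" using r(2) q0Q by (auto simp: B'_def)
    have finE': "finite E'" by (simp add: E'_def)
    have E'Q: "\<And>q. q \<in> E' \<Longrightarrow> q < Q \<and> q \<notin> B \<and> q \<noteq> q0" by (auto simp: E'_def B'_def)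
    have Zfar: "filterlim (\<lambda>n. norm (Z n q)) at_top sequentially" if q: "q \<in> E'" for q
    proof -
      have "norm (Z n q) = real (Suc q) * real n" for n using E'Q[OF q] e unfolding Z_def by simp
      moreover have "filterlim (\<lambda>n. real (Suc q) * real n) at_top sequentially"
        by (rule filterlim_tendsto_pos_mult_at_top[OF tendsto_const _ filterlim_real_sequentially]) simp
      ultimately show ?thesis by simp
    qed
    have Zoff: "(\<lambda>n. gauss_kernel \<sigma> (Z n p) (Z n q)) \<longlonglongrightarrow> 0" if pq: "p \<in> E'" "q \<in> E'" "p \<noteq> q" for p q
    proof -
      have "Z n p - Z n q = ((real (Suc p) - real (Suc q)) * real n) *\<^sub>R e" for n
        using E'Q[OF pq(1)] E'Q[OF pq(2)] unfolding Z_def by (simp add: algebra_simps)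
      hence nrm: "norm (Z n p - Z n q) = \<bar>real (Suc p) - real (Suc q)\<bar> * real n" for n
        using e by (simp add: abs_mult)
      have pos: "0 < \<bar>real (Suc p) - real (Suc q)\<bar>" using pq(3) by simp
      have "filterlim (\<lambda>n. norm (Z n p - Z n q)) at_top sequentially"
        unfolding nrm by (rule filterlim_tendsto_pos_mult_at_top[OF tendsto_const pos filterlim_real_sequentially])
      from gk_far[OF sp this tendsto_const[of 0]] show ?thesis
        by (subst gk_shift) simp
    qed
    have ZB': "\<And>n q. q \<in> B' \<Longrightarrow> Z n q = Zc q" by (auto simp: Z_def Zc_def B'_def)
    define G where "G n = (\<Sum>p\<in>E'. \<Sum>q\<in>E'-{p}. \<beta> p * \<beta> q * gauss_kernel \<sigma> (Z n p) (Z n q))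
       + 2 * (\<Sum>p\<in>B'. \<Sum>q\<in>E'. \<beta> p * \<beta> q * gauss_kernel \<sigma> (Z n p) (Z n q))
       - 2 * (\<Sum>q\<in>E'. \<beta> q * hk (Z n q))" for n
    have Peq: "Phi Q \<beta> (Z n) = K + (\<Sum>q\<in>E'. (\<beta> q)\<^sup>2) + G n" for n
    proof -
      have "Phi Q \<beta> (Z n) = PhiS B' \<beta> (Z n)
        + (\<Sum>p\<in>E'. \<Sum>q\<in>E'. \<beta> p * \<beta> q * gauss_kernel \<sigma> (Z n p) (Z n q))
        + 2 * (\<Sum>p\<in>B'. \<Sum>q\<in>E'. \<beta> p * \<beta> q * gauss_kernel \<sigma> (Z n p) (Z n q))
        - 2 * (\<Sum>q\<in>E'. \<beta> q * hk (Z n q))"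
        unfolding Phi_def E'_def by (rule decomp[OF _ B'Q]) simp
      moreover have "PhiS B' \<beta> (Z n) = K" unfolding K_def by (rule PhiS_cong) (simp add: ZB')
      moreover have "(\<Sum>p\<in>E'. \<Sum>q\<in>E'. \<beta> p * \<beta> q * gauss_kernel \<sigma> (Z n p) (Z n q))
         = (\<Sum>q\<in>E'. (\<beta> q)\<^sup>2) + (\<Sum>p\<in>E'. \<Sum>q\<in>E'-{p}. \<beta> p * \<beta> q * gauss_kernel \<sigma> (Z n p) (Z n q))"
        by (rule diag_split[OF finE'])
      ultimately show ?thesis unfolding G_def by simp
    qed
    have Gconv: "G \<longlonglongrightarrow> 0"
    proof -
      have 1: "(\<lambda>n. \<Sum>p\<in>E'. \<Sum>q\<in>E'-{p}. \<beta> p * \<beta> q * gauss_kernel \<sigma> (Z n p) (Z n q)) \<longlonglongrightarrow> (\<Sum>p\<in>E'. \<Sum>q\<in>E'-{p}. \<beta> p * \<beta> q * 0)"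
        by (intro tendsto_sum tendsto_mult tendsto_const Zoff) auto
      have 2: "(\<lambda>n. \<Sum>p\<in>B'. \<Sum>q\<in>E'. \<beta> p * \<beta> q * gauss_kernel \<sigma> (Z n p) (Z n q)) \<longlonglongrightarrow> (\<Sum>p\<in>B'. \<Sum>q\<in>E'. \<beta> p * \<beta> q * 0)"
      proof (intro tendsto_sum tendsto_mult tendsto_const)
        fix p q assume pq: "p \<in> B'" "q \<in> E'"
        show "(\<lambda>n. gauss_kernel \<sigma> (Z n p) (Z n q)) \<longlonglongrightarrow> 0"
          using gk_far[OF sp Zfar[OF pq(2)] tendsto_const[of "Zc p"]] ZB'[OF pq(1)] by (simp add: gk_sym)
      qed
      have 3: "(\<lambda>n. \<Sum>q\<in>E'. \<beta> q * hk (Z n q)) \<longlonglongrightarrow> (\<Sum>q\<in>E'. \<beta> q * 0)"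
        by (intro tendsto_sum tendsto_mult tendsto_const hk_far Zfar)
      show ?thesis unfolding G_def
        using tendsto_diff[OF tendsto_add[OF 1 tendsto_mult[OF tendsto_const 2]] tendsto_mult[OF tendsto_const 3]] by simp
    qed
    have PZconv: "(\<lambda>n. Phi Q \<beta> (Z n)) \<longlonglongrightarrow> K + (\<Sum>q\<in>E'. (\<beta> q)\<^sup>2)"
      unfolding Peq using tendsto_add[OF tendsto_const Gconv] by simp
    have Kval: "K = PhiS B \<beta> x + (\<beta> q0)\<^sup>2 + 2 * \<beta> q0 * ((\<Sum>p\<in>B. \<beta> p * gauss_kernel \<sigma> (x p) y) - hk y)"
    proof -
      have "K = PhiS B \<beta> Zc + (\<Sum>p\<in>B'-B. \<Sum>q\<in>B'-B. \<beta> p * \<beta> q * gauss_kernel \<sigma> (Zc p) (Zc q))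
        + 2 * (\<Sum>p\<in>B. \<Sum>q\<in>B'-B. \<beta> p * \<beta> q * gauss_kernel \<sigma> (Zc p) (Zc q))
        - 2 * (\<Sum>q\<in>B'-B. \<beta> q * hk (Zc q))"
        unfolding K_def by (rule decomp) (auto simp: B'_def finB)
      moreover have "B' - B = {q0}" using q0Q by (auto simp: B'_def)
      moreover have "PhiS B \<beta> Zc = PhiS B \<beta> x" by (rule PhiS_cong) (simp add: Zc_def)
      moreover have "Zc q0 = y" using q0Q by (simp add: Zc_def)
      moreover have "(\<Sum>p\<in>B. \<beta> p * \<beta> q0 * gauss_kernel \<sigma> (Zc p) y) = \<beta> q0 * (\<Sum>p\<in>B. \<beta> p * gauss_kernel \<sigma> (x p) y)"
        by (auto simp: sum_distrib_left Zc_def intro!: sum.cong)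
      ultimately show ?thesis by (simp add: gk_same power2_eq_square algebra_simps)
    qed
    have Lval: "L = PhiS B \<beta> x + (\<beta> q0)\<^sup>2 + (\<Sum>q\<in>E'. (\<beta> q)\<^sup>2)"
    proof -
      have "E = insert q0 E'" using q0 by (auto simp: E_def E'_def B'_def)
      moreover have "q0 \<notin> E'" by (simp add: E'_def B'_def)
      ultimately show ?thesis unfolding L_def using finE' by simp
    qed
    have neg: "2 * \<beta> q0 * ((\<Sum>p\<in>B. \<beta> p * gauss_kernel \<sigma> (x p) y) - hk y) < 0"
      using bq0 y by (simp add: mult_pos_neg)
    have "K + (\<Sum>q\<in>E'. (\<beta> q)\<^sup>2) < m" using Kval Lval neg Lm by simp
    hence "eventually (\<lambda>n. Phi Q \<beta> (Z n) < m) sequentially" using order_tendstoD(2)[OF PZconv] by blast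
    then obtain n where "Phi Q \<beta> (Z n) < m" by (auto simp: eventually_sequentially)
    with mle[OF \<beta>(1)] show ?thesis by (simp add: not_le[symmetric])
  qed
qed

end


theorem proposition3:
  fixes \<sigma> :: real and \<eta> :: "'a::euclidean_space measure" and Q :: nat
  assumes "\<sigma> > 0" and "prob_space \<eta>" and "sets \<eta> = sets borel" and "Q \<ge> 1"
  shows "(\<forall>\<alpha>\<in>prob_simplex Q. \<exists>X. \<forall>Y.
            gdist2 \<sigma> (dirac_comb Q \<alpha> X) \<eta> \<le> gdist2 \<sigma> (dirac_comb Q \<alpha> Y) \<eta>)
       \<and> (\<exists>X. \<exists>\<alpha>\<in>prob_simplex Q. \<forall>Y. \<forall>\<beta>\<in>prob_simplex Q.
            gdist2 \<sigma> (dirac_comb Q \<alpha> X) \<eta> \<le> gdist2 \<sigma> (dirac_comb Q \<beta> Y) \<eta>)"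
proof -
  interpret gsetting \<sigma> \<eta> using assms(1-3) by (rule gsetting.intro)
  have geq: "\<And>\<beta> X. \<beta> \<in> prob_simplex Q \<Longrightarrow> gdist2 \<sigma> (dirac_comb Q \<beta> X) \<eta> = Phi Q \<beta> X"
    using gdist_eq simplex_bounds by blast
  have P1: "\<exists>X. \<forall>Y. gdist2 \<sigma> (dirac_comb Q \<alpha> X) \<eta> \<le> gdist2 \<sigma> (dirac_comb Q \<alpha> Y) \<eta>"
    if a: "\<alpha> \<in> prob_simplex Q" for \<alpha>
  proof -
    have "\<exists>X. \<exists>\<beta>\<in>{\<alpha>}. \<forall>Y. \<forall>\<gamma>\<in>{\<alpha>}. Phi Q \<beta> X \<le> Phi Q \<gamma> Y"
    proof (rule main)
      show "{\<alpha>} \<subseteq> prob_simplex Q" using a by simp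
      show "{\<alpha>} \<noteq> {}" by simp
      fix \<beta>s b assume h: "\<forall>n. \<beta>s n \<in> {\<alpha>}" "\<forall>q<Q. (\<lambda>n. \<beta>s n q) \<longlonglongrightarrow> b q"
      have "\<forall>q<Q. \<alpha> q = b q"
      proof (intro allI impI)
        fix q assume "q < Q"
        hence "(\<lambda>n. \<alpha> q) \<longlonglongrightarrow> b q" using h by simp
        thus "\<alpha> q = b q" using LIMSEQ_unique[OF tendsto_const] by blast
      qed
      thus "\<exists>\<beta>'\<in>{\<alpha>}. \<forall>q<Q. \<beta>' q = b q" by simp
    qed
    thus ?thesis using geq[OF a] by auto
  qed
  have "\<exists>X. \<exists>\<beta>\<in>prob_simplex Q. \<forall>Y. \<forall>\<gamma>\<in>prob_simplex Q. Phi Q \<beta> X \<le> Phi Q \<gamma> Y"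
  proof (rule main)
    show "prob_simplex Q \<subseteq> prob_simplex Q" by simp
    have "(\<lambda>q. if q = 0 then 1 else 0 :: real) \<in> prob_simplex Q"
      using assms(4) by (simp add: prob_simplex_def sum.delta)
    thus "prob_simplex Q \<noteq> {}" by blast
    fix \<beta>s b assume h: "\<forall>n. \<beta>s n \<in> prob_simplex Q" "\<forall>q<Q. (\<lambda>n. \<beta>s n q) \<longlonglongrightarrow> b q"
    define b' where "b' q = (if q < Q then b q else 0)" for q
    have nn: "\<forall>q<Q. 0 \<le> b' q"
    proof (intro allI impI)
      fix q assume q: "q < Q"
      have "0 \<le> b q"
        by (rule LIMSEQ_le_const[OF h(2)[rule_format, OF q]]) (use h(1) q in \<open>auto simp: prob_simplex_def\<close>)
      thus "0 \<le> b' q" using q by (simp add: b'_def)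
    qed
    have "(\<lambda>n. \<Sum>q<Q. \<beta>s n q) \<longlonglongrightarrow> (\<Sum>q<Q. b q)"
      by (intro tendsto_sum) (use h(2) in auto)
    moreover have "(\<lambda>n. \<Sum>q<Q. \<beta>s n q) = (\<lambda>n. 1)" using h(1) by (simp add: prob_simplex_def)
    ultimately have "(\<Sum>q<Q. b q) = 1" using LIMSEQ_unique[OF tendsto_const] by metis
    hence "(\<Sum>q<Q. b' q) = 1" by (simp add: b'_def)
    hence bin: "b' \<in> prob_simplex Q" using nn by (simp add: prob_simplex_def)
    have "\<forall>q<Q. b' q = b q" by (simp add: b'_def)
    with bin show "\<exists>\<beta>'\<in>prob_simplex Q. \<forall>q<Q. \<beta>' q = b q" by blast
  qed
  hence P2: "\<exists>X. \<exists>\<alpha>\<in>prob_simplex Q. \<forall>Y. \<forall>\<beta>\<in>prob_simplex Q.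
            gdist2 \<sigma> (dirac_comb Q \<alpha> X) \<eta> \<le> gdist2 \<sigma> (dirac_comb Q \<beta> Y) \<eta>"
    using geq by metis
  show ?thesis using P1 P2 by blast
qed


end
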